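(* Let $E=(A\subset B)\in\mathcal S$ and $\ell\ge0$, and let $\pi:E\to E|^\ell=(A/p^\ell A\subset B/p^\ell A)$ be the morphism given by the canonical projection $B\to B/p^\ell A$. Then $\pi$ is a minimal left approximation of $E$ in $\mathcal S_\ell$: every morphism $E\to F$ with $F\in\mathcal S_\ell$ factors through $\pi$, and every endomorphism $u$ of $E|^\ell$ with $u\pi=\pi$ is an automorphism.
   Context: Let $R$ be a commutative principal ideal domain, $p$ a generator of a maximal ideal. A $p$-module is a finite-length $R$-module annihilated by some power of $p$. $\mathcal S$ is the category of embeddings $(A\subset B)$ of a submodule in a $p$-module, morphisms $(A\subset B)\to(A'\subset B')$ being $R$-maps $f:B\to B'$ with $f(A)\subseteq A'$. $\mathcal S_\ell$ is the full subcategory of objects with $p^\ell A=0$. *)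

theory Defs
  imports "HOL-Algebra.Algebra"
begin

definition rlinear :: "'r ring \<Rightarrow> ('r,'a) module \<Rightarrow> ('r,'b) module \<Rightarrow> ('a \<Rightarrow> 'b) \<Rightarrow> bool" where
  "rlinear R M N f \<longleftrightarrow>
     f \<in> carrier M \<rightarrow> carrier N \<and>
     (\<forall>x\<in>carrier M. \<forall>y\<in>carrier M. f (x \<oplus>\<^bsub>M\<^esub> y) = f x \<oplus>\<^bsub>N\<^esub> f y) \<and>
     (\<forall>r\<in>carrier R. \<forall>x\<in>carrier M. f (r \<odot>\<^bsub>M\<^esub> x) = r \<odot>\<^bsub>N\<^esub> f x)"

definition finite_length :: "'r ring \<Rightarrow> ('r,'a) module \<Rightarrow> bool" where
  "finite_length R M \<longleftrightarrow>
     (\<exists>n::nat. \<forall>(c :: nat \<Rightarrow> 'a set) k.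
        (\<forall>i\<le>k. submodule (c i) R M) \<and> (\<forall>i<k. c i \<subset> c (Suc i)) \<longrightarrow> k \<le> n)"

definition p_module :: "'r ring \<Rightarrow> 'r \<Rightarrow> ('r,'a) module \<Rightarrow> bool" where
  "p_module R p M \<longleftrightarrow> module R M \<and> finite_length R M \<and>
     (\<exists>n::nat. \<forall>x\<in>carrier M. (p [^]\<^bsub>R\<^esub> n) \<odot>\<^bsub>M\<^esub> x = \<zero>\<^bsub>M\<^esub>)"

definition S_obj :: "'r ring \<Rightarrow> 'r \<Rightarrow> 'a set \<times> ('r,'a) module \<Rightarrow> bool" where
  "S_obj R p E \<longleftrightarrow> p_module R p (snd E) \<and> submodule (fst E) R (snd E)"

definition S_ell_obj :: "'r ring \<Rightarrow> 'r \<Rightarrow> nat \<Rightarrow> 'a set \<times> ('r,'a) module \<Rightarrow> bool" where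
  "S_ell_obj R p l E \<longleftrightarrow> S_obj R p E \<and>
     (\<forall>a\<in>fst E. (p [^]\<^bsub>R\<^esub> l) \<odot>\<^bsub>snd E\<^esub> a = \<zero>\<^bsub>snd E\<^esub>)"

definition S_mor :: "'r ring \<Rightarrow> 'a set \<times> ('r,'a) module \<Rightarrow> 'b set \<times> ('r,'b) module \<Rightarrow> ('a \<Rightarrow> 'b) \<Rightarrow> bool" where
  "S_mor R E F f \<longleftrightarrow> rlinear R (snd E) (snd F) f \<and> f ` fst E \<subseteq> fst F"

definition S_iso :: "'r ring \<Rightarrow> 'a set \<times> ('r,'a) module \<Rightarrow> 'b set \<times> ('r,'b) module \<Rightarrow> ('a \<Rightarrow> 'b) \<Rightarrow> bool" where
  "S_iso R E F f \<longleftrightarrow> S_mor R E F f \<and>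
     (\<exists>g. S_mor R F E g \<and> (\<forall>x\<in>carrier (snd E). g (f x) = x) \<and> (\<forall>y\<in>carrier (snd F). f (g y) = y))"

definition mcoset :: "('r,'a) module \<Rightarrow> 'a set \<Rightarrow> 'a \<Rightarrow> 'a set" where
  "mcoset M N x = {x \<oplus>\<^bsub>M\<^esub> n | n. n \<in> N}"

definition quot_module :: "('r,'a) module \<Rightarrow> 'a set \<Rightarrow> ('r, 'a set) module" where
  "quot_module M N =
     \<lparr> partial_object.carrier = mcoset M N ` carrier M,
       monoid.mult = (\<lambda>U V. U), monoid.one = N,
       ring.zero = N,
       ring.add = (\<lambda>U V. {x \<oplus>\<^bsub>M\<^esub> y | x y. x \<in> U \<and> y \<in> V}),
       module.smult = (\<lambda>r U. {r \<odot>\<^bsub>M\<^esub> x \<oplus>\<^bsub>M\<^esub> n | x n. x \<in> U \<and> n \<in> N}) \<rparr>"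

definition pow_smult :: "'r ring \<Rightarrow> 'r \<Rightarrow> nat \<Rightarrow> ('r,'a) module \<Rightarrow> 'a set \<Rightarrow> 'a set" where
  "pow_smult R p l M A = {(p [^]\<^bsub>R\<^esub> l) \<odot>\<^bsub>M\<^esub> a | a. a \<in> A}"

definition trunc_proj :: "'r ring \<Rightarrow> 'r \<Rightarrow> nat \<Rightarrow> 'a set \<times> ('r,'a) module \<Rightarrow> 'a \<Rightarrow> 'a set" where
  "trunc_proj R p l E = mcoset (snd E) (pow_smult R p l (snd E) (fst E))"

definition trunc :: "'r ring \<Rightarrow> 'r \<Rightarrow> nat \<Rightarrow> 'a set \<times> ('r,'a) module \<Rightarrow> 'a set set \<times> ('r,'a set) module" where
  "trunc R p l E = (trunc_proj R p l E ` fst E,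
                    quot_module (snd E) (pow_smult R p l (snd E) (fst E)))"

end

theory Submission
  imports Defs
begin

locale qm = module R M for R :: "'a ring" (structure) and M :: "('a,'c) module" (structure) +
  fixes N assumes N: "submodule N R M"
begin

abbreviation "cs \<equiv> mcoset M N"
abbreviation "Q \<equiv> quot_module M N"

lemma N_sub: "N \<subseteq> carrier M" and N_zero: "\<zero>\<^bsub>M\<^esub> \<in> N"
  and N_neg: "n \<in> N \<Longrightarrow> \<ominus>\<^bsub>M\<^esub> n \<in> N"
  and N_add: "n \<in> N \<Longrightarrow> m \<in> N \<Longrightarrow> n \<oplus>\<^bsub>M\<^esub> m \<in> N"
  and N_smult: "a \<in> carrier R \<Longrightarrow> n \<in> N \<Longrightarrow> a \<odot>\<^bsub>M\<^esub> n \<in> N"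
  using submoduleE[OF N] submodule.axioms(1)[OF N] subgroup.one_closed[of N "add_monoid M"]
  by auto

lemma cs_mem: "y \<in> cs x \<longleftrightarrow> (\<exists>n\<in>N. y = x \<oplus>\<^bsub>M\<^esub> n)"
  by (auto simp: mcoset_def)

lemma cs_sub: "x \<in> carrier M \<Longrightarrow> cs x \<subseteq> carrier M"
  using N_sub by (auto simp: cs_mem intro!: M.a_closed)

lemma cs_self: "x \<in> carrier M \<Longrightarrow> x \<in> cs x"
  using N_zero by (auto simp: cs_mem intro!: bexI[of _ "\<zero>\<^bsub>M\<^esub>"])

lemma cs_eq: assumes x: "x \<in> carrier M" and y: "y \<in> cs x" shows "cs y = cs x"
proof -
  obtain m where m: "m \<in> N" "y = x \<oplus>\<^bsub>M\<^esub> m" using y by (auto simp: cs_mem)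
  have mc: "m \<in> carrier M" using m N_sub by auto
  show ?thesis
  proof (intro equalityI subsetI)
      fix z assume "z \<in> cs y"
      then obtain n where n: "n \<in> N" "z = y \<oplus>\<^bsub>M\<^esub> n" by (auto simp: cs_mem)
      have "z = x \<oplus>\<^bsub>M\<^esub> (m \<oplus>\<^bsub>M\<^esub> n)" using n m x mc N_sub by (auto simp: M.a_assoc)
      thus "z \<in> cs x" using N_add n m by (auto simp: cs_mem)
    next
      fix z assume "z \<in> cs x"
      then obtain n where n: "n \<in> N" "z = x \<oplus>\<^bsub>M\<^esub> n" by (auto simp: cs_mem)
      have nc: "n \<in> carrier M" using n N_sub by auto
      have "z = y \<oplus>\<^bsub>M\<^esub> ((\<ominus>\<^bsub>M\<^esub> m) \<oplus>\<^bsub>M\<^esub> n)"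
        using n m x mc nc by (simp add: M.a_assoc M.a_assoc[symmetric, of m] M.r_neg)
      thus "z \<in> cs y" using N_add N_neg n m by (auto simp: cs_mem)
  qed
qed

lemma cs_N: assumes "n \<in> N" shows "cs n = N"
proof -
  have "cs n = cs \<zero>\<^bsub>M\<^esub>"
    using assms N_sub by (intro cs_eq) (auto simp: cs_mem intro!: bexI[of _ n])
  also have "\<dots> = N"
  proof -
    have "\<And>n. n \<in> N \<Longrightarrow> \<zero>\<^bsub>M\<^esub> \<oplus>\<^bsub>M\<^esub> n = n" using N_sub by auto
    thus ?thesis by (auto simp: cs_mem)
  qed
  finally show ?thesis .
qed

lemma Q_carrier: "carrier Q = cs ` carrier M" by (simp add: quot_module_def)
lemma Q_zero: "\<zero>\<^bsub>Q\<^esub> = cs \<zero>\<^bsub>M\<^esub>" using cs_N[OF N_zero] by (simp add: quot_module_def)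

lemma Q_add: assumes x: "x \<in> carrier M" and y: "y \<in> carrier M"
  shows "cs x \<oplus>\<^bsub>Q\<^esub> cs y = cs (x \<oplus>\<^bsub>M\<^esub> y)"
proof -
  have "{a \<oplus>\<^bsub>M\<^esub> b | a b. a \<in> cs x \<and> b \<in> cs y} = cs (x \<oplus>\<^bsub>M\<^esub> y)"
  proof (intro equalityI subsetI)
    fix z assume "z \<in> {a \<oplus>\<^bsub>M\<^esub> b | a b. a \<in> cs x \<and> b \<in> cs y}"
    then obtain n m where nm: "n \<in> N" "m \<in> N" "z = (x \<oplus>\<^bsub>M\<^esub> n) \<oplus>\<^bsub>M\<^esub> (y \<oplus>\<^bsub>M\<^esub> m)"
      by (auto simp: cs_mem)
    have "z = (x \<oplus>\<^bsub>M\<^esub> y) \<oplus>\<^bsub>M\<^esub> (n \<oplus>\<^bsub>M\<^esub> m)"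
      using nm x y N_sub subsetD[OF N_sub nm(1)] subsetD[OF N_sub nm(2)] by (simp add: M.a_ac)
    thus "z \<in> cs (x \<oplus>\<^bsub>M\<^esub> y)" using nm N_add by (auto simp: cs_mem)
  next
    fix z assume "z \<in> cs (x \<oplus>\<^bsub>M\<^esub> y)"
    then obtain n where n: "n \<in> N" "z = (x \<oplus>\<^bsub>M\<^esub> y) \<oplus>\<^bsub>M\<^esub> n" by (auto simp: cs_mem)
    have "z = x \<oplus>\<^bsub>M\<^esub> (y \<oplus>\<^bsub>M\<^esub> n)" using n x y N_sub by (auto simp: M.a_ac)
    moreover have "y \<oplus>\<^bsub>M\<^esub> n \<in> cs y" using n by (auto simp: cs_mem)
    ultimately show "z \<in> {a \<oplus>\<^bsub>M\<^esub> b | a b. a \<in> cs x \<and> b \<in> cs y}"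
      using cs_self[OF x] by blast
  qed
  thus ?thesis by (simp add: quot_module_def)
qed

lemma Q_smult: assumes r: "r \<in> carrier R" and x: "x \<in> carrier M"
  shows "r \<odot>\<^bsub>Q\<^esub> cs x = cs (r \<odot>\<^bsub>M\<^esub> x)"
proof -
  have "{r \<odot>\<^bsub>M\<^esub> a \<oplus>\<^bsub>M\<^esub> n | a n. a \<in> cs x \<and> n \<in> N} = cs (r \<odot>\<^bsub>M\<^esub> x)"
  proof (intro equalityI subsetI)
    fix z assume "z \<in> {r \<odot>\<^bsub>M\<^esub> a \<oplus>\<^bsub>M\<^esub> n | a n. a \<in> cs x \<and> n \<in> N}"
    then obtain n m where nm: "n \<in> N" "m \<in> N" "z = r \<odot>\<^bsub>M\<^esub> (x \<oplus>\<^bsub>M\<^esub> m) \<oplus>\<^bsub>M\<^esub> n"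
      by (auto simp: cs_mem)
    have "z = (r \<odot>\<^bsub>M\<^esub> x) \<oplus>\<^bsub>M\<^esub> (r \<odot>\<^bsub>M\<^esub> m \<oplus>\<^bsub>M\<^esub> n)"
      using nm x r subsetD[OF N_sub nm(1)] subsetD[OF N_sub nm(2)] by (simp add: M.a_ac smult_r_distr)
    thus "z \<in> cs (r \<odot>\<^bsub>M\<^esub> x)" using nm N_add N_smult r by (auto simp: cs_mem)
  next
    fix z assume "z \<in> cs (r \<odot>\<^bsub>M\<^esub> x)"
    then obtain n where n: "n \<in> N" "z = r \<odot>\<^bsub>M\<^esub> x \<oplus>\<^bsub>M\<^esub> n" by (auto simp: cs_mem)
    thus "z \<in> {r \<odot>\<^bsub>M\<^esub> a \<oplus>\<^bsub>M\<^esub> n | a n. a \<in> cs x \<and> n \<in> N}"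
      using cs_self[OF x] by blast
  qed
  thus ?thesis by (simp add: quot_module_def)
qed

lemma Q_cases: assumes "U \<in> carrier Q" obtains x where "x \<in> carrier M" "U = cs x"
  using assms by (auto simp: Q_carrier)

lemma Q_module: "module R Q"
proof (rule moduleI)
  show "cring R" by (rule is_cring)
  show "abelian_group Q"
  proof (rule abelian_groupI)
    fix U V assume "U \<in> carrier Q" "V \<in> carrier Q"
    then show "U \<oplus>\<^bsub>Q\<^esub> V \<in> carrier Q"
      by (auto elim!: Q_cases simp: Q_add Q_carrier)
  next
    show "\<zero>\<^bsub>Q\<^esub> \<in> carrier Q" by (simp add: Q_zero Q_carrier)
  next
    fix U V W assume "U \<in> carrier Q" "V \<in> carrier Q" "W \<in> carrier Q"
    then show "U \<oplus>\<^bsub>Q\<^esub> V \<oplus>\<^bsub>Q\<^esub> W = U \<oplus>\<^bsub>Q\<^esub> (V \<oplus>\<^bsub>Q\<^esub> W)"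
      by (auto elim!: Q_cases simp: Q_add M.a_assoc)
  next
    fix U V assume "U \<in> carrier Q" "V \<in> carrier Q"
    then show "U \<oplus>\<^bsub>Q\<^esub> V = V \<oplus>\<^bsub>Q\<^esub> U"
      by (auto elim!: Q_cases simp: Q_add M.a_comm)
  next
    fix U assume "U \<in> carrier Q"
    then show "\<zero>\<^bsub>Q\<^esub> \<oplus>\<^bsub>Q\<^esub> U = U"
      by (auto elim!: Q_cases simp: Q_add Q_zero)
  next
    fix U assume "U \<in> carrier Q"
    then obtain x where x: "x \<in> carrier M" "U = cs x" by (rule Q_cases)
    have "cs (\<ominus>\<^bsub>M\<^esub> x) \<oplus>\<^bsub>Q\<^esub> U = \<zero>\<^bsub>Q\<^esub>"
      using x by (simp add: Q_add Q_zero M.l_neg)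
    moreover have "cs (\<ominus>\<^bsub>M\<^esub> x) \<in> carrier Q" using x by (simp add: Q_carrier)
    ultimately show "\<exists>V\<in>carrier Q. V \<oplus>\<^bsub>Q\<^esub> U = \<zero>\<^bsub>Q\<^esub>" by blast
  qed
next
  fix a U assume "a \<in> carrier R" "U \<in> carrier Q"
  then show "a \<odot>\<^bsub>Q\<^esub> U \<in> carrier Q" by (auto elim!: Q_cases simp: Q_smult Q_carrier)
next
  fix a b U assume "a \<in> carrier R" "b \<in> carrier R" "U \<in> carrier Q"
  then show "(a \<oplus>\<^bsub>R\<^esub> b) \<odot>\<^bsub>Q\<^esub> U = a \<odot>\<^bsub>Q\<^esub> U \<oplus>\<^bsub>Q\<^esub> b \<odot>\<^bsub>Q\<^esub> U"
    by (auto elim!: Q_cases simp: Q_smult Q_add smult_l_distr)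
next
  fix a U V assume "a \<in> carrier R" "U \<in> carrier Q" "V \<in> carrier Q"
  then show "a \<odot>\<^bsub>Q\<^esub> (U \<oplus>\<^bsub>Q\<^esub> V) = a \<odot>\<^bsub>Q\<^esub> U \<oplus>\<^bsub>Q\<^esub> a \<odot>\<^bsub>Q\<^esub> V"
    by (auto elim!: Q_cases simp: Q_smult Q_add smult_r_distr)
next
  fix a b U assume "a \<in> carrier R" "b \<in> carrier R" "U \<in> carrier Q"
  then show "(a \<otimes>\<^bsub>R\<^esub> b) \<odot>\<^bsub>Q\<^esub> U = a \<odot>\<^bsub>Q\<^esub> (b \<odot>\<^bsub>Q\<^esub> U)"
    by (auto elim!: Q_cases simp: Q_smult smult_assoc1)
next
  fix U assume "U \<in> carrier Q"
  then show "\<one>\<^bsub>R\<^esub> \<odot>\<^bsub>Q\<^esub> U = U"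
    by (auto elim!: Q_cases simp: Q_smult)
qed

lemma Q_minus: assumes x: "x \<in> carrier M" shows "\<ominus>\<^bsub>Q\<^esub> cs x = cs (\<ominus>\<^bsub>M\<^esub> x)"
proof -
  interpret Q: module R Q by (rule Q_module)
  show ?thesis
    by (rule Q.minus_equality) (use x in \<open>auto simp: Q_add Q_zero M.l_neg Q_carrier\<close>)
qed

lemma Union_char: assumes "S \<subseteq> carrier Q" shows "\<Union>S = {x\<in>carrier M. cs x \<in> S}"
proof (intro equalityI subsetI)
  fix x assume "x \<in> \<Union>S"
  then obtain U where U: "U \<in> S" "x \<in> U" by auto
  then obtain y where y: "y \<in> carrier M" "U = cs y" using assms by (auto elim!: Q_cases)
  have "x \<in> carrier M" using U y cs_sub by auto
  moreover have "cs x = U" using cs_eq y U by auto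
  ultimately show "x \<in> {x\<in>carrier M. cs x \<in> S}" using U by auto
next
  fix x assume "x \<in> {x\<in>carrier M. cs x \<in> S}"
  thus "x \<in> \<Union>S" using cs_self by auto
qed

lemma Union_submodule: assumes S: "submodule S R Q" shows "submodule (\<Union>S) R M"
proof -
  interpret Q: module R Q by (rule Q_module)
  have Ssub: "S \<subseteq> carrier Q" using Q.submoduleE(1)[OF S] .
  note ch = Union_char[OF Ssub]
  show ?thesis unfolding ch
  proof (rule submoduleI)
    show "\<zero>\<^bsub>M\<^esub> \<in> {x \<in> carrier M. cs x \<in> S}"
      using submodule.axioms(1)[OF S] subgroup.one_closed[of S "add_monoid Q"] Q_zero by auto
  next
    fix a assume "a \<in> {x \<in> carrier M. cs x \<in> S}"
    thus "\<ominus>\<^bsub>M\<^esub> a \<in> {x \<in> carrier M. cs x \<in> S}"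
      using Q.submoduleE(3)[OF S, of "cs a"] Q_minus by auto
  next
    fix a b assume "a \<in> {x \<in> carrier M. cs x \<in> S}" "b \<in> {x \<in> carrier M. cs x \<in> S}"
    thus "a \<oplus>\<^bsub>M\<^esub> b \<in> {x \<in> carrier M. cs x \<in> S}"
      using Q.submoduleE(5)[OF S, of "cs a" "cs b"] Q_add by auto
  next
    fix a x assume "a \<in> carrier R" "x \<in> {x \<in> carrier M. cs x \<in> S}"
    thus "a \<odot>\<^bsub>M\<^esub> x \<in> {x \<in> carrier M. cs x \<in> S}"
      using Q.submoduleE(4)[OF S, of a "cs x"] Q_smult by auto
  qed auto
qed

lemma Q_finite_length: assumes "finite_length R M" shows "finite_length R Q"
proof -
  interpret Q: module R Q by (rule Q_module)
  obtain n where n: "\<And>(c :: nat \<Rightarrow> 'c set) k. (\<forall>i\<le>k. submodule (c i) R M) \<and> (\<forall>i<k. c i \<subset> c (Suc i)) \<Longrightarrow> k \<le> n"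
    using assms unfolding finite_length_def by blast
  show ?thesis unfolding finite_length_def
  proof (intro exI allI impI)
    fix c :: "nat \<Rightarrow> 'c set set" and k
    assume A: "(\<forall>i\<le>k. submodule (c i) R Q) \<and> (\<forall>i<k. c i \<subset> c (Suc i))"
    define d where "d i = \<Union>(c i)" for i
    have "\<forall>i\<le>k. submodule (d i) R M" using A Union_submodule d_def by auto
    moreover have "\<forall>i<k. d i \<subset> d (Suc i)"
    proof (intro allI impI)
      fix i assume i: "i < k"
      have s1: "c i \<subseteq> carrier Q" using A i Q.submoduleE(1) by auto
      have s2: "c (Suc i) \<subseteq> carrier Q" using A i Q.submoduleE(1) by auto
      have lt: "c i \<subset> c (Suc i)" using A i by auto
      then obtain U where U: "U \<in> c (Suc i)" "U \<notin> c i" by auto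
      then obtain y where y: "y \<in> carrier M" "U = cs y" using s2 by (auto elim!: Q_cases)
      show "d i \<subset> d (Suc i)" unfolding d_def Union_char[OF s1] Union_char[OF s2]
        using lt U y by auto
    qed
    ultimately show "k \<le> n" using n by blast
  qed
qed

lemma Q_annih: assumes "a \<in> carrier R" "\<forall>x\<in>carrier M. a \<odot>\<^bsub>M\<^esub> x = \<zero>\<^bsub>M\<^esub>"
  shows "\<forall>U\<in>carrier Q. a \<odot>\<^bsub>Q\<^esub> U = \<zero>\<^bsub>Q\<^esub>"
  using assms by (auto elim!: Q_cases simp: Q_smult Q_zero)

lemma cs_rlinear: "rlinear R M Q cs"
  unfolding rlinear_def by (auto simp: Q_carrier Q_add Q_smult)

lemma Q_factor:
  assumes M': "module R M'" and g: "rlinear R M M' g" and gN: "\<And>n. n \<in> N \<Longrightarrow> g n = \<zero>\<^bsub>M'\<^esub>"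
  shows "\<exists>h. rlinear R Q M' h \<and> (\<forall>x\<in>carrier M. h (cs x) = g x)"
proof -
  interpret M': module R M' by (rule M')
  define h where "h U = g (SOME x. x \<in> U)" for U
  have hx: "h (cs x) = g x" if x: "x \<in> carrier M" for x
  proof -
    have "(SOME y. y \<in> cs x) \<in> cs x" using cs_self[OF x] by (rule someI)
    then obtain n where n: "n \<in> N" "(SOME y. y \<in> cs x) = x \<oplus>\<^bsub>M\<^esub> n" by (auto simp: cs_mem)
    have nc: "n \<in> carrier M" using n N_sub by auto
    have "h (cs x) = g x \<oplus>\<^bsub>M'\<^esub> g n" using g x nc n unfolding h_def rlinear_def by auto
    also have "\<dots> = g x"
    proof -
      have "g x \<in> carrier M'" using g x unfolding rlinear_def by auto
      thus ?thesis using gN[OF n(1)] by simp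
    qed
    finally show ?thesis .
  qed
  have "rlinear R Q M' h"
    unfolding rlinear_def using g
    by (auto elim!: Q_cases simp: Q_carrier Q_add Q_smult hx rlinear_def)
  thus ?thesis using hx by blast
qed

end

lemma pow_submodule:
  assumes B: "module R B" and A: "submodule A R B" and c: "c \<in> carrier R"
  shows "submodule {c \<odot>\<^bsub>B\<^esub> a | a. a \<in> A} R B"
proof -
  interpret B: module R B by (rule B)
  note AE = B.submoduleE[OF A]
  have A0: "\<zero>\<^bsub>B\<^esub> \<in> A" using submodule.axioms(1)[OF A] subgroup.one_closed[of A "add_monoid B"] by auto
  show ?thesis
  proof (rule B.submoduleI)
    show "{c \<odot>\<^bsub>B\<^esub> a | a. a \<in> A} \<subseteq> carrier B" using AE(1) c by auto
    show "\<zero>\<^bsub>B\<^esub> \<in> {c \<odot>\<^bsub>B\<^esub> a | a. a \<in> A}" using A0 c by (auto intro!: exI[of _ "\<zero>\<^bsub>B\<^esub>"])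
  next
    fix x assume "x \<in> {c \<odot>\<^bsub>B\<^esub> a | a. a \<in> A}"
    then obtain a where a: "a \<in> A" "x = c \<odot>\<^bsub>B\<^esub> a" by auto
    have "\<ominus>\<^bsub>B\<^esub> x = c \<odot>\<^bsub>B\<^esub> (\<ominus>\<^bsub>B\<^esub> a)" using a c AE(1) B.smult_r_minus by auto
    thus "\<ominus>\<^bsub>B\<^esub> x \<in> {c \<odot>\<^bsub>B\<^esub> a | a. a \<in> A}" using AE(3) a by auto
  next
    fix x y assume "x \<in> {c \<odot>\<^bsub>B\<^esub> a | a. a \<in> A}" "y \<in> {c \<odot>\<^bsub>B\<^esub> a | a. a \<in> A}"
    then obtain a b where ab: "a \<in> A" "x = c \<odot>\<^bsub>B\<^esub> a" "b \<in> A" "y = c \<odot>\<^bsub>B\<^esub> b" by auto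
    have "x \<oplus>\<^bsub>B\<^esub> y = c \<odot>\<^bsub>B\<^esub> (a \<oplus>\<^bsub>B\<^esub> b)" using ab c subsetD[OF AE(1) ab(1)] subsetD[OF AE(1) ab(3)] by (simp add: B.smult_r_distr)
    thus "x \<oplus>\<^bsub>B\<^esub> y \<in> {c \<odot>\<^bsub>B\<^esub> a | a. a \<in> A}" using AE(5) ab by auto
  next
    fix r x assume r: "r \<in> carrier R" and "x \<in> {c \<odot>\<^bsub>B\<^esub> a | a. a \<in> A}"
    then obtain a where a: "a \<in> A" "x = c \<odot>\<^bsub>B\<^esub> a" by auto
    have "r \<odot>\<^bsub>B\<^esub> x = c \<odot>\<^bsub>B\<^esub> (r \<odot>\<^bsub>B\<^esub> a)"
      using a c r AE(1) B.smult_assoc1[symmetric] B.m_comm by (auto simp: B.smult_assoc1[symmetric])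
    thus "r \<odot>\<^bsub>B\<^esub> x \<in> {c \<odot>\<^bsub>B\<^esub> a | a. a \<in> A}" using AE(4) a r by auto
  qed
qed

theorem lemma8:
  fixes R :: "'r ring" and p :: 'r and l :: nat
    and E :: "'a set \<times> ('r,'a) module"
  assumes "principal_domain R"
    and "p \<in> carrier R"
    and "maximalideal (PIdl\<^bsub>R\<^esub> p) R"
    and "S_obj R p E"
  shows "S_ell_obj R p l (trunc R p l E)
       \<and> S_mor R E (trunc R p l E) (trunc_proj R p l E)
       \<and> (\<forall>(F :: 'b set \<times> ('r,'b) module) g.
            S_ell_obj R p l F \<and> S_mor R E F g \<longrightarrow>
            (\<exists>h. S_mor R (trunc R p l E) F h \<and>
                 (\<forall>b\<in>carrier (snd E). h (trunc_proj R p l E b) = g b)))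
       \<and> (\<forall>u. S_mor R (trunc R p l E) (trunc R p l E) u \<and>
               (\<forall>b\<in>carrier (snd E). u (trunc_proj R p l E b) = trunc_proj R p l E b) \<longrightarrow>
               S_iso R (trunc R p l E) (trunc R p l E) u)"
proof -
  interpret R: principal_domain R by (rule assms(1))
  obtain A B where E: "E = (A, B)" by (cases E)
  have pB: "p_module R p B" and subA: "submodule A R B" using assms(4) E by (auto simp: S_obj_def)
  have modB: "module R B" using pB by (simp add: p_module_def)
  interpret B: module R B by (rule modB)
  have cR: "p [^]\<^bsub>R\<^esub> l \<in> carrier R" using assms(2) by simp
  define N where "N = pow_smult R p l B A"
  have subN: "submodule N R B" unfolding N_def pow_smult_def by (rule pow_submodule[OF modB subA cR])
  interpret qm R B N by (intro qm.intro qm_axioms.intro modB subN)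
  interpret Q: module R Q by (rule Q_module)
  have tr: "trunc R p l E = (cs ` A, Q)" and tp: "trunc_proj R p l E = cs"
    by (simp_all add: E trunc_def trunc_proj_def N_def)
  note AE = B.submoduleE[OF subA]
  have A0: "\<zero>\<^bsub>B\<^esub> \<in> A" using submodule.axioms(1)[OF subA] subgroup.one_closed[of A "add_monoid B"] by auto
  have QN: "\<zero>\<^bsub>Q\<^esub> = N" using Q_zero cs_N[OF N_zero] by simp
  have P1: "S_ell_obj R p l (cs ` A, Q)"
    unfolding S_ell_obj_def S_obj_def p_module_def
  proof (intro conjI)
    show "module R (snd (cs ` A, Q))" using Q_module by simp
    show "finite_length R (snd (cs ` A, Q))" using Q_finite_length pB by (simp add: p_module_def)
    obtain n where n: "\<forall>x\<in>carrier B. (p [^]\<^bsub>R\<^esub> (n::nat)) \<odot>\<^bsub>B\<^esub> x = \<zero>\<^bsub>B\<^esub>" using pB by (auto simp: p_module_def)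
    show "\<exists>n::nat. \<forall>x\<in>carrier (snd (cs ` A, Q)). p [^]\<^bsub>R\<^esub> n \<odot>\<^bsub>snd (cs ` A, Q)\<^esub> x = \<zero>\<^bsub>snd (cs ` A, Q)\<^esub>"
      using Q_annih[of "p [^]\<^bsub>R\<^esub> n"] n assms(2) by auto
    show "submodule (fst (cs ` A, Q)) R (snd (cs ` A, Q))"
      unfolding fst_conv snd_conv
    proof (rule Q.submoduleI)
      show "cs ` A \<subseteq> carrier Q" using AE(1) by (auto simp: Q_carrier)
      show "\<zero>\<^bsub>Q\<^esub> \<in> cs ` A" using A0 Q_zero by auto
    next
      fix U assume "U \<in> cs ` A" thus "\<ominus>\<^bsub>Q\<^esub> U \<in> cs ` A" using AE(1,3) Q_minus by auto
    next
      fix U V assume "U \<in> cs ` A" "V \<in> cs ` A" thus "U \<oplus>\<^bsub>Q\<^esub> V \<in> cs ` A" using AE(1,5) Q_add by (force simp: subset_iff)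
    next
      fix r U assume "r \<in> carrier R" "U \<in> cs ` A" thus "r \<odot>\<^bsub>Q\<^esub> U \<in> cs ` A" using AE(1,4) Q_smult by auto
    qed
    show "\<forall>a\<in>fst (cs ` A, Q). p [^]\<^bsub>R\<^esub> l \<odot>\<^bsub>snd (cs ` A, Q)\<^esub> a = \<zero>\<^bsub>snd (cs ` A, Q)\<^esub>"
    proof
      fix U assume "U \<in> fst (cs ` A, Q)"
      then obtain a where a: "a \<in> A" "U = cs a" by auto
      have "p [^]\<^bsub>R\<^esub> l \<odot>\<^bsub>B\<^esub> a \<in> N" using a unfolding N_def pow_smult_def by auto
      thus "p [^]\<^bsub>R\<^esub> l \<odot>\<^bsub>snd (cs ` A, Q)\<^esub> U = \<zero>\<^bsub>snd (cs ` A, Q)\<^esub>"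
        using a AE(1) cR Q_smult cs_N QN by auto
    qed
  qed
  have P2: "S_mor R (A, B) (cs ` A, Q) cs" using cs_rlinear by (simp add: S_mor_def)
  have P3: "S_ell_obj R p l F \<and> S_mor R (A, B) F g \<longrightarrow>
            (\<exists>h. S_mor R (cs ` A, Q) F h \<and> (\<forall>b\<in>carrier B. h (cs b) = g b))"
    for F :: "'b set \<times> ('r,'b) module" and g
  proof
    assume H: "S_ell_obj R p l F \<and> S_mor R (A, B) F g"
    obtain A' M' where F: "F = (A', M')" by (cases F)
    have M': "module R M'" using H F by (auto simp: S_ell_obj_def S_obj_def p_module_def)
    interpret M': module R M' by (rule M')
    have g: "rlinear R B M' g" "g ` A \<subseteq> A'" using H F by (auto simp: S_mor_def)
    have ann: "\<forall>a\<in>A'. p [^]\<^bsub>R\<^esub> l \<odot>\<^bsub>M'\<^esub> a = \<zero>\<^bsub>M'\<^esub>" using H F by (auto simp: S_ell_obj_def)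
    have gN: "g n = \<zero>\<^bsub>M'\<^esub>" if nN: "n \<in> N" for n
    proof -
      obtain a where a: "a \<in> A" "n = p [^]\<^bsub>R\<^esub> l \<odot>\<^bsub>B\<^esub> a" using nN unfolding N_def pow_smult_def by blast
      have "g n = p [^]\<^bsub>R\<^esub> l \<odot>\<^bsub>M'\<^esub> g a" using g(1) a AE(1) cR unfolding rlinear_def by auto
      thus ?thesis using ann g(2) a by auto
    qed
    obtain h where h: "rlinear R Q M' h" "\<forall>x\<in>carrier B. h (cs x) = g x"
      using Q_factor[OF M' g(1) gN] by blast
    have "h ` (cs ` A) \<subseteq> A'" using h(2) g(2) AE(1) by auto
    thus "\<exists>h. S_mor R (cs ` A, Q) F h \<and> (\<forall>b\<in>carrier B. h (cs b) = g b)"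
      using h F by (auto simp: S_mor_def)
  qed
  have P4: "S_mor R (cs ` A, Q) (cs ` A, Q) u \<and> (\<forall>b\<in>carrier B. u (cs b) = cs b) \<longrightarrow>
            S_iso R (cs ` A, Q) (cs ` A, Q) u" for u
  proof
    assume H: "S_mor R (cs ` A, Q) (cs ` A, Q) u \<and> (\<forall>b\<in>carrier B. u (cs b) = cs b)"
    have "\<forall>x\<in>carrier Q. u (u x) = x" using H by (auto simp: Q_carrier)
    thus "S_iso R (cs ` A, Q) (cs ` A, Q) u" using H unfolding S_iso_def by auto
  qed
  show ?thesis unfolding tr tp using P1 P2 P3 P4 by (simp add: E)
qed

end
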